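(* Let $\alpha\ge1$. If all valuation functions are symmetric submodular and every item cost function is non-decreasing and $\alpha$-average-decreasing, then for every (truthfully reported) valuation profile the allocation $A$ output by IACSM satisfies $\pi(A)\le 2\alpha^3H_n\cdot\pi(A^* )$, where $A^*$ is an allocation minimizing the social cost $\pi$.
   Context: Players $N=\{1,\dots,n\}$, items $M=\{1,\dots,m\}$, non-decreasing valuations $v_i:2^M\to\mathbb{R}_{\ge0}$; symmetric: $f(S)=f(T)$ whenever $|S|=|T|$; submodular: $f(S\cup\{x\})-f(S)\ge f(T\cup\{x\})-f(T)$ for $S\subseteq T$, $x\notin T$. Item cost functions $c_j:2^N\to\mathbb{R}_{\ge0}$; $c$ is $\alpha$-average-decreasing if $\alpha\frac{c(S)}{|S|}\ge\frac{c(T)}{|T|}$ for all nonempty $S\subseteq T\subseteq N$. For an allocation $A=(A_1,\dots,A_n)$, $T_j=\{i:j\in A_i\}$ and the social cost is $\pi(A)=\sum_{j\in M}c_j(T_j)+\sum_{i\in N}(v_i(M)-v_i(A_i))$. $H_n=\sum_{k=1}^n1/k$. Mechanism IACSM (input: declared valuations $b$): maintain active set $X=N$, sets $T_j=N$ and cost shares $\chi_j=c_j(N)/n$ for all items $j$. While $X\neq\emptyset$: (1) every $i\in X$ computes $A_i\in\arg\max_{S\subseteq M}\{b_i(S)-\sum_{j\in S}\chi_j\}$, choosing among maximizers one of maximum cardinality $k$, and among those the $k$ items with smallest current $\chi_j$ (item ties by index); (2) choose $i^*\in X$ with $|A_{i^*}|$ minimum (ties by smallest index); (3) assign $A_{i^*}$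 to $i^*$ permanently and remove $i^*$ from $X$; (4) for every item $j\notin A_{i^*}$ set $T_j:=T_j\setminus\{i^*\}$ and, if $T_j\ne\emptyset$, set $\chi_j:=\max\{\chi_j,c_j(T_j)/|T_j|\}$. Output the assigned bundles and payments $p_i=\sum_{j\in A_i}\chi_j$ with final cost shares. *)

theory Defs
  imports "HOL-Analysis.Analysis"
begin

text \<open>An allocation is a function A from players to bundles (items are replicable: several
  players may receive the same item; T_j is the set of players receiving j).\<close>

definition allocation :: "nat \<Rightarrow> nat \<Rightarrow> (nat \<Rightarrow> nat set) \<Rightarrow> bool" where
  "allocation n m A \<longleftrightarrow> (\<forall>i<n. A i \<subseteq> {..<m})"

definition receivers :: "nat \<Rightarrow> (nat \<Rightarrow> nat set) \<Rightarrow> nat \<Rightarrow> nat set" where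
  "receivers n A j = {i \<in> {..<n}. j \<in> A i}"

definition social_cost ::
  "nat \<Rightarrow> nat \<Rightarrow> (nat \<Rightarrow> nat set \<Rightarrow> real) \<Rightarrow> (nat \<Rightarrow> nat set \<Rightarrow> real) \<Rightarrow> (nat \<Rightarrow> nat set) \<Rightarrow> real" where
  "social_cost n m v c A =
     (\<Sum>j<m. c j (receivers n A j)) + (\<Sum>i<n. v i {..<m} - v i (A i))"

definition non_decreasing :: "'a set \<Rightarrow> ('a set \<Rightarrow> real) \<Rightarrow> bool" where
  "non_decreasing U f \<longleftrightarrow> (\<forall>S T. S \<subseteq> T \<and> T \<subseteq> U \<longrightarrow> f S \<le> f T)"

definition symmetric_fn :: "'a set \<Rightarrow> ('a set \<Rightarrow> real) \<Rightarrow> bool" where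
  "symmetric_fn U f \<longleftrightarrow> (\<forall>S T. S \<subseteq> U \<and> T \<subseteq> U \<and> card S = card T \<longrightarrow> f S = f T)"

definition submodular :: "'a set \<Rightarrow> ('a set \<Rightarrow> real) \<Rightarrow> bool" where
  "submodular U f \<longleftrightarrow> (\<forall>S T x. S \<subseteq> T \<and> T \<subseteq> U \<and> x \<in> U \<and> x \<notin> T \<longrightarrow>
      f (insert x S) - f S \<ge> f (insert x T) - f T)"

definition avg_decreasing :: "real \<Rightarrow> 'a set \<Rightarrow> ('a set \<Rightarrow> real) \<Rightarrow> bool" where
  "avg_decreasing \<alpha> U f \<longleftrightarrow> (\<forall>S T. S \<noteq> {} \<and> S \<subseteq> T \<and> T \<subseteq> U \<longrightarrow>
      \<alpha> * (f S / card S) \<ge> f T / card T)"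

definition util :: "(nat \<Rightarrow> nat set \<Rightarrow> real) \<Rightarrow> (nat \<Rightarrow> real) \<Rightarrow> nat \<Rightarrow> nat set \<Rightarrow> real" where
  "util b sh i S = b i S - (\<Sum>j\<in>S. sh j)"

definition best_util :: "nat \<Rightarrow> (nat \<Rightarrow> nat set \<Rightarrow> real) \<Rightarrow> (nat \<Rightarrow> real) \<Rightarrow> nat \<Rightarrow> real" where
  "best_util m b sh i = Max (util b sh i ` Pow {..<m})"

definition demand_card :: "nat \<Rightarrow> (nat \<Rightarrow> nat set \<Rightarrow> real) \<Rightarrow> (nat \<Rightarrow> real) \<Rightarrow> nat \<Rightarrow> nat" where
  "demand_card m b sh i =
     Max (card ` {S \<in> Pow {..<m}. util b sh i S = best_util m b sh i})"

definition cheapest :: "nat \<Rightarrow> (nat \<Rightarrow> real) \<Rightarrow> nat \<Rightarrow> nat set" where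
  "cheapest m sh k = {j \<in> {..<m}.
      card {j' \<in> {..<m}. sh j' < sh j \<or> (sh j' = sh j \<and> j' < j)} < k}"

definition demand :: "nat \<Rightarrow> (nat \<Rightarrow> nat set \<Rightarrow> real) \<Rightarrow> (nat \<Rightarrow> real) \<Rightarrow> nat \<Rightarrow> nat set" where
  "demand m b sh i = cheapest m sh (demand_card m b sh i)"

type_synonym state = "nat set \<times> (nat \<Rightarrow> nat set) \<times> (nat \<Rightarrow> real) \<times> (nat \<Rightarrow> nat set)"
  (* active set X, sets T_j, cost shares chi_j, assigned bundles *)

definition iacsm_step ::
  "nat \<Rightarrow> (nat \<Rightarrow> nat set \<Rightarrow> real) \<Rightarrow> (nat \<Rightarrow> nat set \<Rightarrow> real) \<Rightarrow> state \<Rightarrow> state" where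
  "iacsm_step m b c st = (case st of (X, T, sh, A) \<Rightarrow>
     if X = {} then (X, T, sh, A) else
     (let istar = (LEAST i. i \<in> X \<and> (\<forall>i'\<in>X. demand_card m b sh i \<le> demand_card m b sh i'));
          D = demand m b sh istar;
          T' = (\<lambda>j. if j \<in> D then T j else T j - {istar});
          sh' = (\<lambda>j. if j \<notin> D \<and> T' j \<noteq> {}
                     then max (sh j) (c j (T' j) / real (card (T' j))) else sh j)
      in (X - {istar}, T', sh', A(istar := D))))"

definition iacsm_init :: "nat \<Rightarrow> (nat \<Rightarrow> nat set \<Rightarrow> real) \<Rightarrow> state" where
  "iacsm_init n c = ({..<n}, (\<lambda>j. {..<n}), (\<lambda>j. c j {..<n} / real n), (\<lambda>i. {}))"

text \<open>Each round removes exactly one active player, so n rounds empty X.\<close>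
definition iacsm ::
  "nat \<Rightarrow> nat \<Rightarrow> (nat \<Rightarrow> nat set \<Rightarrow> real) \<Rightarrow> (nat \<Rightarrow> nat set \<Rightarrow> real) \<Rightarrow> (nat \<Rightarrow> nat set)" where
  "iacsm n m b c = snd (snd (snd ((iacsm_step m b c ^^ n) (iacsm_init n c))))"

end

theory Submission
  imports Defs
begin


definition prec :: "(nat \<Rightarrow> real) \<Rightarrow> nat \<Rightarrow> nat \<Rightarrow> bool" where
  "prec sh a b \<longleftrightarrow> sh a < sh b \<or> (sh a = sh b \<and> a < b)"

definition rk :: "nat \<Rightarrow> (nat \<Rightarrow> real) \<Rightarrow> nat \<Rightarrow> nat" where
  "rk m sh j = card {j' \<in> {..<m}. prec sh j' j}"

lemma cheapest_rk: "cheapest m sh k = {j \<in> {..<m}. rk m sh j < k}"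
  unfolding cheapest_def rk_def prec_def by simp

lemma prec_trans: "prec sh a b \<Longrightarrow> prec sh b c \<Longrightarrow> prec sh a c"
  unfolding prec_def by auto

lemma prec_irrefl: "\<not> prec sh a a"
  unfolding prec_def by auto

lemma prec_total: "a \<noteq> b \<Longrightarrow> prec sh a b \<or> prec sh b a"
  unfolding prec_def by auto

lemma rk_less: assumes "prec sh a b" "a < m" shows "rk m sh a < rk m sh b"
proof -
  have "{j' \<in> {..<m}. prec sh j' a} \<subset> {j' \<in> {..<m}. prec sh j' b}"
    using assms prec_trans prec_irrefl by blast
  then show ?thesis unfolding rk_def by (intro psubset_card_mono) auto
qed

lemma rk_bound: assumes "j < m" shows "rk m sh j < m"
proof -
  have "{j' \<in> {..<m}. prec sh j' j} \<subseteq> {..<m} - {j}" using prec_irrefl by blast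
  hence "rk m sh j \<le> card ({..<m} - {j})" unfolding rk_def by (intro card_mono) auto
  also have "\<dots> = m - 1" using assms by simp
  finally show ?thesis using assms by linarith
qed

lemma rk_inj: "inj_on (rk m sh) {..<m}"
proof (rule inj_onI)
  fix a b assume a: "a \<in> {..<m}" and b: "b \<in> {..<m}" and e: "rk m sh a = rk m sh b"
  show "a = b"
  proof (rule ccontr)
    assume "a \<noteq> b"
    then have "prec sh a b \<or> prec sh b a" by (rule prec_total)
    then show False using rk_less[of sh a b m] rk_less[of sh b a m] a b e by auto
  qed
qed

lemma rk_image: "rk m sh ` {..<m} = {..<m}"
  using rk_inj rk_bound by (intro endo_inj_surj) auto

lemma card_cheapest: "card (cheapest m sh k) = min k m"
proof -
  have "bij_betw (rk m sh) (cheapest m sh k) (rk m sh ` cheapest m sh k)"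
    using rk_inj by (intro inj_on_imp_bij_betw) (auto simp: cheapest_rk intro: inj_on_subset)
  moreover have "rk m sh ` cheapest m sh k = {..<min k m}"
  proof
    show "rk m sh ` cheapest m sh k \<subseteq> {..<min k m}" using rk_bound by (auto simp: cheapest_rk)
    show "{..<min k m} \<subseteq> rk m sh ` cheapest m sh k"
    proof
      fix x assume "x \<in> {..<min k m}"
      then have "x \<in> rk m sh ` {..<m}" "x < k" using rk_image by auto
      then show "x \<in> rk m sh ` cheapest m sh k" by (auto simp: cheapest_rk)
    qed
  qed
  ultimately show ?thesis by (simp add: bij_betw_same_card)
qed

lemma cheapest_sub: "cheapest m sh k \<subseteq> {..<m}"
  by (auto simp: cheapest_rk)

lemma cheapest_mono: "k \<le> k' \<Longrightarrow> cheapest m sh k \<subseteq> cheapest m sh k'"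
  by (auto simp: cheapest_rk)

lemma cheapest_prec:
  assumes "a \<in> cheapest m sh k" "b < m" "b \<notin> cheapest m sh k"
  shows "prec sh a b"
proof -
  have ra: "rk m sh a < k" "a < m" using assms by (auto simp: cheapest_rk)
  have rb: "\<not> rk m sh b < k" using assms by (auto simp: cheapest_rk)
  have "a \<noteq> b" using assms by auto
  moreover have "\<not> prec sh b a" using rk_less[of sh b a m] ra rb assms by auto
  ultimately show ?thesis using prec_total by blast
qed

lemma cheapest_le:
  assumes "a \<in> cheapest m sh k" "b < m" "b \<notin> cheapest m sh k"
  shows "sh a \<le> sh b"
  using cheapest_prec[OF assms] unfolding prec_def by auto

lemma sum_le_exchange:
  fixes f :: "nat \<Rightarrow> real"
  assumes "finite A" "finite B" "card A = card B" "\<forall>a\<in>A. \<forall>b\<in>B. f a \<le> f b"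
  shows "sum f A \<le> sum f B"
proof (cases "A = {}")
  case True then show ?thesis using assms by simp
next
  case False
  define M where "M = Max (f ` A)"
  have "M \<in> f ` A" unfolding M_def using False assms by auto
  then obtain a0 where a0: "a0 \<in> A" "M = f a0" by auto
  have "sum f A \<le> of_nat (card A) * M"
    using sum_bounded_above[of A f M] assms unfolding M_def by auto
  also have "\<dots> \<le> sum f B"
    using sum_bounded_below[of B M f] assms a0 by auto
  finally show ?thesis .
qed

lemma cheapest_sum_le:
  assumes "S \<subseteq> {..<m}"
  shows "sum sh (cheapest m sh (card S)) \<le> sum sh S"
proof -
  let ?C = "cheapest m sh (card S)"
  have fS: "finite S" by (rule finite_subset[OF assms]) simp
  have cS: "card S \<le> m" using card_mono[OF _ assms] by simp
  have cC: "card ?C = card S" using card_cheapest cS by simp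
  have fC: "finite ?C" by (rule finite_subset[OF cheapest_sub]) simp
  have "card (?C - S) = card (S - ?C)"
  proof -
    have "card (?C - S) = card ?C - card (?C \<inter> S)" using fC by (simp add: card_Diff_subset_Int)
    moreover have "card (S - ?C) = card S - card (S \<inter> ?C)" using fS by (simp add: card_Diff_subset_Int)
    ultimately show ?thesis using cC by (simp add: Int_commute)
  qed
  moreover have "\<forall>a\<in>?C - S. \<forall>b\<in>S - ?C. sh a \<le> sh b"
  proof (intro ballI)
    fix a b assume a: "a \<in> ?C - S" and b: "b \<in> S - ?C"
    have "b < m" using b assms by auto
    then show "sh a \<le> sh b" using cheapest_le[of a m sh "card S" b] a b by simp
  qed
  ultimately have "sum sh (?C - S) \<le> sum sh (S - ?C)"
    using fC fS by (intro sum_le_exchange) simp_all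
  moreover have "sum sh ?C = sum sh (?C - S) + sum sh (?C \<inter> S)"
    using fC sum.Int_Diff[of ?C sh S] by (simp add: Int_commute)
  moreover have "sum sh S = sum sh (S - ?C) + sum sh (?C \<inter> S)"
    using fS sum.Int_Diff[of S sh ?C] by (simp add: Int_commute)
  ultimately show ?thesis by linarith
qed




definition g :: "nat \<Rightarrow> (nat \<Rightarrow> nat set \<Rightarrow> real) \<Rightarrow> (nat \<Rightarrow> real) \<Rightarrow> nat \<Rightarrow> nat \<Rightarrow> real" where
  "g m b sh i k = util b sh i (cheapest m sh k)"

lemma best_ge: "S \<subseteq> {..<m} \<Longrightarrow> util b sh i S \<le> best_util m b sh i"
  unfolding best_util_def by (intro Max_ge) auto

lemma best_in: "\<exists>S \<subseteq> {..<m}. util b sh i S = best_util m b sh i"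
proof -
  have "best_util m b sh i \<in> util b sh i ` Pow {..<m}"
    unfolding best_util_def by (intro Max_in) auto
  then show ?thesis by auto
qed

lemma g_le_best: "g m b sh i k \<le> best_util m b sh i"
  unfolding g_def using cheapest_sub by (intro best_ge)

lemma util_le_g:
  assumes sym: "symmetric_fn {..<m} (b i)" and S: "S \<subseteq> {..<m}"
  shows "util b sh i S \<le> g m b sh i (card S)"
proof -
  have cS: "card S \<le> m" using card_mono[OF _ S] by simp
  have "card (cheapest m sh (card S)) = card S" using card_cheapest cS by simp
  then have "b i S = b i (cheapest m sh (card S))"
    using sym[unfolded symmetric_fn_def, rule_format, of S "cheapest m sh (card S)"] S cheapest_sub by simp
  then show ?thesis unfolding g_def util_def using cheapest_sum_le[OF S, of sh] by simp
qed

lemma dc_props: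
  assumes sym: "symmetric_fn {..<m} (b i)"
  shows "g m b sh i (demand_card m b sh i) = best_util m b sh i"
    and "demand_card m b sh i \<le> m"
    and "\<And>k. k \<le> m \<Longrightarrow> g m b sh i k = best_util m b sh i \<Longrightarrow> k \<le> demand_card m b sh i"
proof -
  let ?M = "{S \<in> Pow {..<m}. util b sh i S = best_util m b sh i}"
  have finM: "finite ?M" by (rule finite_subset[of _ "Pow {..<m}"]) auto
  have fin: "finite (card ` ?M)" using finM by (rule finite_imageI)
  obtain S0 where "S0 \<subseteq> {..<m}" "util b sh i S0 = best_util m b sh i" using best_in[of m b sh i] by blast
  then have ne: "?M \<noteq> {}" by blast
  have "demand_card m b sh i \<in> card ` ?M"
    unfolding demand_card_def using fin ne by (intro Max_in) simp_all
  then obtain S where S: "S \<subseteq> {..<m}" "util b sh i S = best_util m b sh i" "card S = demand_card m b sh i" by auto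
  show "g m b sh i (demand_card m b sh i) = best_util m b sh i"
  proof -
    have "best_util m b sh i \<le> g m b sh i (demand_card m b sh i)"
      using util_le_g[of m b i S sh, OF sym S(1)] S(2) S(3) by simp
    then show ?thesis using g_le_best[of m b sh i "demand_card m b sh i"] by linarith
  qed
  show "demand_card m b sh i \<le> m" using S card_mono[OF _ S(1)] by auto
  fix k assume k: "k \<le> m" "g m b sh i k = best_util m b sh i"
  have "cheapest m sh k \<in> ?M" using k(2) cheapest_sub[of m sh k] unfolding g_def by simp
  moreover have "card (cheapest m sh k) = k" using card_cheapest k by simp
  ultimately have "k \<in> card ` ?M" by (metis image_eqI)
  then show "k \<le> demand_card m b sh i" unfolding demand_card_def using fin by (intro Max_ge)
qed

lemma cheapest_Suc:
  assumes "Suc k \<le> m"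
  obtains x where "x < m" "x \<notin> cheapest m sh k" "cheapest m sh (Suc k) = insert x (cheapest m sh k)"
proof -
  have sub: "cheapest m sh k \<subseteq> cheapest m sh (Suc k)" by (rule cheapest_mono) simp
  have fin: "finite (cheapest m sh (Suc k))" by (rule finite_subset[OF cheapest_sub]) simp
  have "card (cheapest m sh (Suc k) - cheapest m sh k) = 1"
    using card_cheapest[of m sh k] card_cheapest[of m sh "Suc k"] assms sub fin
    by (simp add: card_Diff_subset finite_subset)
  then obtain x where x: "cheapest m sh (Suc k) - cheapest m sh k = {x}" by (auto simp: card_Suc_eq)
  then have "x \<in> cheapest m sh (Suc k)" "x \<notin> cheapest m sh k" by auto
  moreover have "cheapest m sh (Suc k) = insert x (cheapest m sh k)" using x sub by blast
  moreover have "x < m" using \<open>x \<in> cheapest m sh (Suc k)\<close> cheapest_sub by auto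
  ultimately show ?thesis using that by simp
qed

lemma g_concave:
  assumes sym: "symmetric_fn {..<m} (b i)" and sub: "submodular {..<m} (b i)"
    and k: "Suc (Suc k) \<le> m"
  shows "g m b sh i (Suc (Suc k)) - g m b sh i (Suc k) \<le> g m b sh i (Suc k) - g m b sh i k"
proof -
  let ?C = "cheapest m sh"
  obtain x where x: "x < m" "x \<notin> ?C k" "?C (Suc k) = insert x (?C k)"
    using cheapest_Suc[of k m sh] k by auto
  obtain y where y: "y < m" "y \<notin> ?C (Suc k)" "?C (Suc (Suc k)) = insert y (?C (Suc k))"
    using cheapest_Suc[of "Suc k" m sh] k by auto
  have fC: "finite (?C j)" for j by (rule finite_subset[OF cheapest_sub]) simp
  have yk: "y \<notin> ?C k" using y x by auto
  have "b i (insert y (?C k)) - b i (?C k) \<ge> b i (insert y (?C (Suc k))) - b i (?C (Suc k))"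
    using sub[unfolded submodular_def, rule_format, of "?C k" "?C (Suc k)" y] y cheapest_sub[of m sh "Suc k"] x by auto
  moreover have "b i (insert y (?C k)) = b i (insert x (?C k))"
  proof -
    have "card (insert y (?C k)) = card (insert x (?C k))" using x yk fC by simp
    moreover have "insert y (?C k) \<subseteq> {..<m}" "insert x (?C k) \<subseteq> {..<m}" using x y cheapest_sub by auto
    ultimately show ?thesis using sym[unfolded symmetric_fn_def, rule_format, of "insert y (?C k)" "insert x (?C k)"] by simp
  qed
  moreover have "sh x \<le> sh y"
    using cheapest_le[of x m sh "Suc k" y] x y by auto
  moreover have "sum sh (?C (Suc k)) = sh x + sum sh (?C k)" using x fC by simp
  moreover have "sum sh (?C (Suc (Suc k))) = sh y + sum sh (?C (Suc k))" using y fC by simp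
  ultimately show ?thesis unfolding g_def util_def using x y by simp
qed

lemma concave_mono_to_max:
  fixes f :: "nat \<Rightarrow> real"
  assumes conc: "\<And>k. Suc (Suc k) \<le> m \<Longrightarrow> f (Suc (Suc k)) - f (Suc k) \<le> f (Suc k) - f k"
    and dm: "d \<le> m" and mx: "\<And>k. k \<le> m \<Longrightarrow> f k \<le> f d"
  shows "\<And>a b. a \<le> b \<Longrightarrow> b \<le> d \<Longrightarrow> f a \<le> f b"
proof -
  have stepf: "f i \<le> f (Suc i)" if "i < d" for i
  proof (rule ccontr)
    assume neg: "\<not> f i \<le> f (Suc i)"
    have dec: "f (Suc j) < f j" if "i \<le> j" "j < d" for j
      using that
    proof (induction j rule: dec_induct)
      case base then show ?case using neg by simp
    next
      case (step j)
      then have "f (Suc j) < f j" by simp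
      moreover have "f (Suc (Suc j)) - f (Suc j) \<le> f (Suc j) - f j" using conc step dm by simp
      ultimately show ?case by simp
    qed
    have "i < j \<longrightarrow> j \<le> d \<longrightarrow> f j < f i" for j
    proof (induction j)
      case 0 then show ?case by simp
    next
      case (Suc j)
      show ?case
      proof (intro impI)
        assume a: "i < Suc j" "Suc j \<le> d"
        show "f (Suc j) < f i"
        proof (cases "i = j")
          case True then show ?thesis using dec[of j] a by simp
        next
          case False then show ?thesis using Suc dec[of j] a by simp
        qed
      qed
    qed
    then have "f d < f i" using \<open>i < d\<close> by simp
    moreover have "f i \<le> f d" using mx \<open>i < d\<close> dm by simp
    ultimately show False by simp
  qed
  fix a b assume "a \<le> b" "b \<le> d"
  then show "f a \<le> f b"
  proof (induction b rule: dec_induct)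
    case base then show ?case by simp
  next
    case (step j) then show ?case using stepf[of j] by simp
  qed
qed




lemma cheapest_stable:
  assumes k: "k \<le> m" and agree: "\<forall>j\<in>cheapest m sh k. sh' j = sh j"
    and ge: "\<forall>j. sh j \<le> sh' j" and k': "k' \<le> k"
  shows "cheapest m sh' k' = cheapest m sh k'"
proof -
  let ?D = "cheapest m sh k"
  have cD: "card ?D = k" using card_cheapest k by simp
  have inD: "rk m sh' j = rk m sh j" if j: "j \<in> ?D" for j
  proof -
    have pD: "a \<in> ?D" if "a < m" "prec sh a j" for a
      using rk_less[OF that(2) that(1)] j by (auto simp: cheapest_rk that(1))
    have "{a \<in> {..<m}. prec sh' a j} = {a \<in> {..<m}. prec sh a j}"
    proof (intro set_eqI iffI)
      fix a assume a: "a \<in> {a \<in> {..<m}. prec sh a j}"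
      then have "a \<in> ?D" using pD by auto
      then have "sh' a = sh a" "sh' j = sh j" using agree j by auto
      then show "a \<in> {a \<in> {..<m}. prec sh' a j}" using a unfolding prec_def by simp
    next
      fix a assume a: "a \<in> {a \<in> {..<m}. prec sh' a j}"
      have "sh a \<le> sh' a" "sh' j = sh j" using ge agree j by auto
      then show "a \<in> {a \<in> {..<m}. prec sh a j}" using a unfolding prec_def by auto
    qed
    then show ?thesis unfolding rk_def by simp
  qed
  have outD: "k \<le> rk m sh' j" if j: "j < m" "j \<notin> ?D" for j
  proof -
    have "?D \<subseteq> {a \<in> {..<m}. prec sh' a j}"
    proof
      fix d assume d: "d \<in> ?D"
      have "prec sh d j" using cheapest_prec[OF d j(1) j(2)] .
      moreover have "sh' d = sh d" "sh j \<le> sh' j" "d < m" using d agree ge cheapest_sub[of m sh k] by auto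
      ultimately show "d \<in> {a \<in> {..<m}. prec sh' a j}" unfolding prec_def by auto
    qed
    then have "card ?D \<le> rk m sh' j" unfolding rk_def by (intro card_mono) auto
    then show ?thesis using cD by simp
  qed
  show ?thesis
  proof (intro set_eqI iffI)
    fix j assume j: "j \<in> cheapest m sh' k'"
    then have jm: "j < m" and r: "rk m sh' j < k'" by (auto simp: cheapest_rk)
    have "j \<in> ?D"
    proof (rule ccontr)
      assume "j \<notin> ?D"
      then have "k \<le> rk m sh' j" using outD jm by blast
      then show False using r k' by simp
    qed
    then show "j \<in> cheapest m sh k'" using inD r jm by (auto simp: cheapest_rk)
  next
    fix j assume j: "j \<in> cheapest m sh k'"
    then have "j \<in> ?D" using cheapest_mono[OF k'] by auto
    then show "j \<in> cheapest m sh' k'" using inD j by (auto simp: cheapest_rk)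
  qed
qed

lemma demand_stable:
  assumes sym: "symmetric_fn {..<m} (b i)" and sub: "submodular {..<m} (b i)"
    and k: "k \<le> m" and agree: "\<forall>j\<in>cheapest m sh k. sh' j = sh j"
    and ge: "\<forall>j. sh j \<le> sh' j" and dk: "k \<le> demand_card m b sh i"
  shows "k \<le> demand_card m b sh' i"
proof (rule ccontr)
  assume "\<not> k \<le> demand_card m b sh' i"
  then have lt: "demand_card m b sh' i < k" by simp
  have geq: "g m b sh' i k'' = g m b sh i k''" if "k'' \<le> k" for k''
  proof -
    have C: "cheapest m sh' k'' = cheapest m sh k''" using cheapest_stable[OF k agree ge that] .
    have "cheapest m sh k'' \<subseteq> cheapest m sh k" using cheapest_mono[OF that] .
    then have "sum sh' (cheapest m sh k'') = sum sh (cheapest m sh k'')" using agree by (intro sum.cong) auto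
    then show ?thesis unfolding g_def util_def C by simp
  qed
  let ?d = "demand_card m b sh i"
  have mx: "g m b sh i kk \<le> g m b sh i ?d" if "kk \<le> m" for kk
    using dc_props(1)[where m=m and b=b and i=i and sh=sh, OF sym] g_le_best[of m b sh i kk] by simp
  have mono: "g m b sh i a \<le> g m b sh i bb" if "a \<le> bb" "bb \<le> ?d" for a bb
    by (rule concave_mono_to_max[of m "g m b sh i" ?d, OF g_concave[where m=m and b=b and i=i and sh=sh, OF sym sub] dc_props(2)[where m=m and b=b and i=i and sh=sh, OF sym] mx that])
  have "best_util m b sh' i = g m b sh' i (demand_card m b sh' i)" using dc_props(1)[where m=m and b=b and i=i and sh=sh', OF sym] by simp
  also have "\<dots> = g m b sh i (demand_card m b sh' i)" using geq lt by simp
  also have "\<dots> \<le> g m b sh i k" using mono[of "demand_card m b sh' i" k] lt dk by simp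
  also have "\<dots> = g m b sh' i k" using geq by simp
  finally have "g m b sh' i k = best_util m b sh' i" using g_le_best[of m b sh' i k] by simp
  then have "k \<le> demand_card m b sh' i" using dc_props(3)[where m=m and b=b and i=i and sh=sh', OF sym k] by simp
  then show False using lt by simp
qed




locale mech =
  fixes n m :: nat and \<alpha> :: real
    and v :: "nat \<Rightarrow> nat set \<Rightarrow> real" and c :: "nat \<Rightarrow> nat set \<Rightarrow> real"
    and Aopt :: "nat \<Rightarrow> nat set"
  assumes alpha: "\<alpha> \<ge> 1"
    and v_mono: "\<forall>i<n. non_decreasing {..<m} (v i)"
    and v_sym: "\<forall>i<n. symmetric_fn {..<m} (v i)"
    and v_sub: "\<forall>i<n. submodular {..<m} (v i)"
    and c_nonneg: "\<forall>j<m. \<forall>T \<subseteq> {..<n}. c j T \<ge> 0"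
    and c_empty: "\<forall>j<m. c j {} = 0"
    and c_mono: "\<forall>j<m. non_decreasing {..<n} (c j)"
    and c_avg: "\<forall>j<m. avg_decreasing \<alpha> {..<n} (c j)"
    and opt_alloc: "allocation n m Aopt"
begin

definition Ts :: "nat \<Rightarrow> nat set" where "Ts j = receivers n Aopt j"

definition Qf :: "nat set \<Rightarrow> (nat \<Rightarrow> nat set) \<Rightarrow> real" where
  "Qf X T = (\<Sum>j<m. real (card (T j - X)) * (c j (T j) / real (card (T j))))"

definition Vp :: "nat set \<Rightarrow> (nat \<Rightarrow> nat set) \<Rightarrow> real" where
  "Vp X A = (\<Sum>i\<in>{..<n} - X. v i {..<m} - v i (A i))"

definition Phi :: "nat set \<Rightarrow> real" where
  "Phi X = (\<Sum>j<m. \<alpha> * c j (Ts j) * (harm (card (Ts j)) - harm (card (Ts j \<inter> X))))"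

definition invs :: "nat \<Rightarrow> nat set \<Rightarrow> (nat \<Rightarrow> nat set) \<Rightarrow> (nat \<Rightarrow> real) \<Rightarrow> (nat \<Rightarrow> nat set) \<Rightarrow> bool" where
  "invs t X T sh A \<longleftrightarrow>
    finite X \<and> X \<subseteq> {..<n} \<and> card X = n - t \<and>
    (\<forall>j. X \<subseteq> T j \<and> T j \<subseteq> {..<n}) \<and>
    (\<forall>i<n. \<forall>j. i \<notin> X \<longrightarrow> (i \<in> T j \<longleftrightarrow> j \<in> A i)) \<and>
    (\<exists>K\<le>m. (\<forall>i<n. i \<notin> X \<longrightarrow> A i \<subseteq> cheapest m sh K) \<and> (\<forall>i\<in>X. K \<le> demand_card m v sh i)) \<and>
    (\<forall>j<m. T j \<noteq> {} \<longrightarrow> c j (T j) / real (card (T j)) \<le> sh j) \<and>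
    (\<forall>j<m. \<forall>R. R \<noteq> {} \<and> R \<subseteq> X \<longrightarrow> sh j \<le> \<alpha> * (c j R / real (card R))) \<and>
    Qf X T + Vp X A \<le> Vp X Aopt + Phi X"

lemma Ts_sub: "Ts j \<subseteq> {..<n}" unfolding Ts_def receivers_def by auto

lemma Ts_mem: "i < n \<Longrightarrow> i \<in> Ts j \<longleftrightarrow> j \<in> Aopt i" unfolding Ts_def receivers_def by auto

lemma Aopt_sub: "i < n \<Longrightarrow> Aopt i \<subseteq> {..<m}" using opt_alloc unfolding allocation_def by auto

lemma avg: "j < m \<Longrightarrow> S \<noteq> {} \<Longrightarrow> S \<subseteq> T \<Longrightarrow> T \<subseteq> {..<n} \<Longrightarrow> c j T / real (card T) \<le> \<alpha> * (c j S / real (card S))"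
  using c_avg unfolding avg_decreasing_def by blast

lemma cmono: "j < m \<Longrightarrow> S \<subseteq> T \<Longrightarrow> T \<subseteq> {..<n} \<Longrightarrow> c j S \<le> c j T"
  using c_mono unfolding non_decreasing_def by blast

lemma invs_init: "invs 0 {..<n} (\<lambda>j. {..<n}) (\<lambda>j. c j {..<n} / real n) (\<lambda>i. {})"
proof -
  have a: "\<forall>j<m. \<forall>R. R \<noteq> {} \<and> R \<subseteq> {..<n} \<longrightarrow> c j {..<n} / real n \<le> \<alpha> * (c j R / real (card R))"
    using avg[of _ _ "{..<n}"] by auto
  have "Phi {..<n} = 0" unfolding Phi_def using Ts_sub by (simp add: Int_absorb2)
  moreover have "Qf {..<n} (\<lambda>j. {..<n}) = 0" unfolding Qf_def by simp
  moreover have "Vp {..<n} A = 0" for A unfolding Vp_def by simp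
  ultimately show ?thesis unfolding invs_def using a by (auto intro: exI[of _ 0])
qed

end



context mech begin

lemma invs_step:
  assumes t: "t < n" and I: "invs t X T sh A"
  shows "case iacsm_step m v c (X, T, sh, A) of (X', T', sh', A') \<Rightarrow> invs (Suc t) X' T' sh' A'"
proof -
  obtain K where finX: "finite X" and Xn: "X \<subseteq> {..<n}" and cX: "card X = n - t"
    and XT: "\<forall>j. X \<subseteq> T j \<and> T j \<subseteq> {..<n}"
    and memb: "\<forall>i<n. \<forall>j. i \<notin> X \<longrightarrow> (i \<in> T j \<longleftrightarrow> j \<in> A i)"
    and K1: "K \<le> m" and K2: "\<forall>i<n. i \<notin> X \<longrightarrow> A i \<subseteq> cheapest m sh K"
    and K3: "\<forall>i\<in>X. K \<le> demand_card m v sh i"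
    and I4: "\<forall>j<m. T j \<noteq> {} \<longrightarrow> c j (T j) / real (card (T j)) \<le> sh j"
    and I5: "\<forall>j<m. \<forall>R. R \<noteq> {} \<and> R \<subseteq> X \<longrightarrow> sh j \<le> \<alpha> * (c j R / real (card R))"
    and acc: "Qf X T + Vp X A \<le> Vp X Aopt + Phi X"
    using I unfolding invs_def apply (elim conjE exE) apply (rule that) apply assumption+ done
  note K = K1 K2 K3
  have Xne: "X \<noteq> {}" using cX t by auto
  let ?dc = "demand_card m v sh"
  define p where "p = (LEAST i. i \<in> X \<and> (\<forall>i'\<in>X. ?dc i \<le> ?dc i'))"
  define D where "D = demand m v sh p"
  define T' where "T' = (\<lambda>j. if j \<in> D then T j else T j - {p})"
  define sh' where "sh' = (\<lambda>j. if j \<notin> D \<and> T' j \<noteq> {}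
                     then max (sh j) (c j (T' j) / real (card (T' j))) else sh j)"
  have step: "iacsm_step m v c (X, T, sh, A) = (X - {p}, T', sh', A(p := D))"
    unfolding iacsm_step_def p_def D_def T'_def sh'_def Let_def using Xne by simp
  have "\<exists>i0. i0 \<in> X \<and> (\<forall>i'\<in>X. ?dc i0 \<le> ?dc i')"
  proof -
    have "Min (?dc ` X) \<in> ?dc ` X" using finX Xne by (intro Min_in) auto
    then obtain i0 where "i0 \<in> X" "?dc i0 = Min (?dc ` X)" by auto
    then show ?thesis using finX by auto
  qed
  then have pp: "p \<in> X \<and> (\<forall>i'\<in>X. ?dc p \<le> ?dc i')" unfolding p_def by (rule LeastI_ex)
  then have pX: "p \<in> X" and pmin: "\<forall>i'\<in>X. ?dc p \<le> ?dc i'" by auto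
  have pn: "p < n" using pX Xn by auto
  have symp: "symmetric_fn {..<m} (v p)" using v_sym pn by auto
  define k where "k = ?dc p"
  have km: "k \<le> m" unfolding k_def by (rule dc_props(2)[where m=m and b=v and i=p and sh=sh, OF symp])
  have Kk: "K \<le> k" using K(3) pX unfolding k_def by auto
  have Dk: "D = cheapest m sh k" unfolding D_def demand_def k_def ..
  have Dm: "D \<subseteq> {..<m}" using Dk cheapest_sub by simp
  have agree: "\<forall>j\<in>cheapest m sh k. sh' j = sh j" unfolding sh'_def Dk by auto
  have ge: "\<forall>j. sh j \<le> sh' j" unfolding sh'_def by auto
  have Dk': "cheapest m sh' k = D" using cheapest_stable[OF km agree ge order_refl] Dk by simp
  have finT: "finite (T j)" for j using XT by (intro finite_subset[of "T j" "{..<n}"]) auto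
  have c1: "finite (X - {p}) \<and> X - {p} \<subseteq> {..<n} \<and> card (X - {p}) = n - Suc t"
    using finX Xn cX pX by auto
  have c2: "\<forall>j. X - {p} \<subseteq> T' j \<and> T' j \<subseteq> {..<n}"
    using XT unfolding T'_def by auto
  have c3: "\<forall>i<n. \<forall>j. i \<notin> X - {p} \<longrightarrow> (i \<in> T' j \<longleftrightarrow> j \<in> (A(p := D)) i)"
  proof (intro allI impI)
    fix i j assume i: "i < n" "i \<notin> X - {p}"
    show "i \<in> T' j \<longleftrightarrow> j \<in> (A(p := D)) i"
    proof (cases "i = p")
      case True then show ?thesis using pX XT unfolding T'_def by auto
    next
      case False then show ?thesis using i memb unfolding T'_def by auto
    qed
  qed
  have c4: "\<exists>K\<le>m. (\<forall>i<n. i \<notin> X - {p} \<longrightarrow> (A(p := D)) i \<subseteq> cheapest m sh' K) \<and>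
      (\<forall>i\<in>X - {p}. K \<le> demand_card m v sh' i)"
  proof (intro exI[of _ k] conjI allI impI ballI)
    show "k \<le> m" by (rule km)
    fix i assume i: "i < n" "i \<notin> X - {p}"
    show "(A(p := D)) i \<subseteq> cheapest m sh' k"
    proof (cases "i = p")
      case True then show ?thesis using Dk' by simp
    next
      case False
      then have "A i \<subseteq> cheapest m sh K" using i K(2) by auto
      also have "\<dots> \<subseteq> cheapest m sh k" using cheapest_mono[OF Kk] .
      finally show ?thesis using False Dk Dk' by simp
    qed
  next
    fix q assume q: "q \<in> X - {p}"
    then have qn: "q < n" using Xn by auto
    have "k \<le> ?dc q" using pmin q unfolding k_def by auto
    then show "k \<le> demand_card m v sh' q"
      using demand_stable[where m=m and b=v and i=q and sh=sh and sh'=sh', OF _ _ km agree ge]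
        v_sym v_sub qn by auto
  qed
  have c5: "\<forall>j<m. T' j \<noteq> {} \<longrightarrow> c j (T' j) / real (card (T' j)) \<le> sh' j"
  proof (intro allI impI)
    fix j assume j: "j < m" "T' j \<noteq> {}"
    show "c j (T' j) / real (card (T' j)) \<le> sh' j"
    proof (cases "j \<in> D")
      case True then show ?thesis using I4 j unfolding T'_def sh'_def by auto
    next
      case False then show ?thesis using j unfolding sh'_def by auto
    qed
  qed
  have c6: "\<forall>j<m. \<forall>R. R \<noteq> {} \<and> R \<subseteq> X - {p} \<longrightarrow> sh' j \<le> \<alpha> * (c j R / real (card R))"
  proof (intro allI impI)
    fix j R assume j: "j < m" and R: "R \<noteq> {} \<and> R \<subseteq> X - {p}"
    have s: "sh j \<le> \<alpha> * (c j R / real (card R))" using I5 j R by auto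
    have "c j (T' j) / real (card (T' j)) \<le> \<alpha> * (c j R / real (card R))"
      using avg[OF j, of R "T' j"] R c2 by auto
    then show "sh' j \<le> \<alpha> * (c j R / real (card R))" using s unfolding sh'_def by auto
  qed
  define X' where "X' = X - {p}"
  define A' where "A' = A(p := D)"
  have TX0: "T j - X = {}" if "j \<notin> D" for j
  proof (rule ccontr)
    assume "T j - X \<noteq> {}"
    then obtain i where i: "i \<in> T j" "i \<notin> X" by auto
    then have "i < n" using XT by auto
    then have "j \<in> A i" using memb i by auto
    moreover have "A i \<subseteq> cheapest m sh K" using K(2) \<open>i < n\<close> i(2) by auto
    then have "A i \<subseteq> D" using cheapest_mono[OF Kk, of m sh] Dk by auto
    ultimately show False using that by auto
  qed
  have qterm: "real (card (T' j - X')) * (c j (T' j) / real (card (T' j)))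
      \<le> real (card (T j - X)) * (c j (T j) / real (card (T j))) + (if j \<in> D then sh j else 0)"
    if j: "j < m" for j
  proof (cases "j \<in> D")
    case True
    have "T' j - X' = insert p (T j - X)" using True pX XT unfolding T'_def X'_def by auto
    moreover have "p \<notin> T j - X" using pX by auto
    ultimately have cc: "card (T' j - X') = Suc (card (T j - X))" using finT[of j] by simp
    have "T j \<noteq> {}" using pX XT by auto
    then have le: "c j (T j) / real (card (T j)) \<le> sh j" using I4 j by auto
    have e: "T' j = T j" using True unfolding T'_def by simp
    have f: "(if j \<in> D then sh j else 0) = sh j" using True by simp
    have cc2: "card (T j - X') = Suc (card (T j - X))" using cc e by simp
    show ?thesis unfolding e cc2 f of_nat_Suc distrib_right mult_1 using le by linarith
  next
    case False
    have "T' j - X' = {}" using TX0[OF False] False unfolding T'_def X'_def by auto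
    then have z1: "card (T' j - X') = 0" by (simp only: card.empty)
    have z2: "card (T j - X) = 0" using TX0[OF False] by (simp only: card.empty)
    show ?thesis unfolding z1 z2 using False by simp
  qed
  have Q: "Qf X' T' \<le> Qf X T + sum sh D"
  proof -
    have "Qf X' T' \<le> (\<Sum>j<m. real (card (T j - X)) * (c j (T j) / real (card (T j))) + (if j \<in> D then sh j else 0))"
      unfolding Qf_def by (intro sum_mono qterm) auto
    also have "\<dots> = Qf X T + (\<Sum>j<m. if j \<in> D then sh j else 0)" unfolding Qf_def by (simp add: sum.distrib)
    also have "(\<Sum>j<m. if j \<in> D then sh j else 0) = sum sh D"
      using sum.inter_restrict[of "{..<m}" sh D] Dm by (simp add: Int_absorb1)
    finally show ?thesis .
  qed
  have ins: "{..<n} - X' = insert p ({..<n} - X)" "p \<notin> {..<n} - X" "finite ({..<n} - X)"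
    using pX pn unfolding X'_def by auto
  have V: "Vp X' A' = Vp X A + (v p {..<m} - v p D)"
  proof -
    have "Vp X' A' = (v p {..<m} - v p D) + (\<Sum>i\<in>{..<n} - X. v i {..<m} - v i (A' i))"
      unfolding Vp_def ins(1) using ins(2,3) by (simp add: A'_def)
    also have "(\<Sum>i\<in>{..<n} - X. v i {..<m} - v i (A' i)) = Vp X A"
      unfolding Vp_def A'_def using pX by (intro sum.cong) auto
    finally show ?thesis by simp
  qed
  have VS: "Vp X' Aopt = Vp X Aopt + (v p {..<m} - v p (Aopt p))"
    unfolding Vp_def ins(1) using ins(2,3) by simp
  have finTs: "finite (Ts j)" for j by (rule finite_subset[OF Ts_sub]) simp
  have phiterm: "\<alpha> * c j (Ts j) * (harm (card (Ts j)) - harm (card (Ts j \<inter> X')))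
     = \<alpha> * c j (Ts j) * (harm (card (Ts j)) - harm (card (Ts j \<inter> X)))
       + (if j \<in> Aopt p then \<alpha> * (c j (Ts j) / real (card (Ts j \<inter> X))) else 0)" for j
  proof (cases "j \<in> Aopt p")
    case True
    then have pT: "p \<in> Ts j" using Ts_mem pn by auto
    have "Ts j \<inter> X = insert p (Ts j \<inter> X')" using pT pX unfolding X'_def by auto
    moreover have "p \<notin> Ts j \<inter> X'" unfolding X'_def by auto
    ultimately have cc: "card (Ts j \<inter> X) = Suc (card (Ts j \<inter> X'))" using finTs[of j] by simp
    have "harm (card (Ts j \<inter> X)) = harm (card (Ts j \<inter> X')) + inverse (real (card (Ts j \<inter> X)))"
      unfolding cc harm_Suc by simp
    then show ?thesis using True by (simp add: algebra_simps divide_inverse)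
  next
    case False
    then have "p \<notin> Ts j" using Ts_mem pn by auto
    then have "Ts j \<inter> X' = Ts j \<inter> X" unfolding X'_def by auto
    then show ?thesis using False by simp
  qed
  have PH: "Phi X' = Phi X + (\<Sum>j\<in>Aopt p. \<alpha> * (c j (Ts j) / real (card (Ts j \<inter> X))))"
  proof -
    have "Phi X' = Phi X + (\<Sum>j<m. if j \<in> Aopt p then \<alpha> * (c j (Ts j) / real (card (Ts j \<inter> X))) else 0)"
      unfolding Phi_def phiterm by (simp add: sum.distrib)
    also have "(\<Sum>j<m. if j \<in> Aopt p then \<alpha> * (c j (Ts j) / real (card (Ts j \<inter> X))) else 0)
        = (\<Sum>j\<in>Aopt p. \<alpha> * (c j (Ts j) / real (card (Ts j \<inter> X))))"
      using sum.inter_restrict[of "{..<m}" "\<lambda>j. \<alpha> * (c j (Ts j) / real (card (Ts j \<inter> X)))" "Aopt p"]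
        Aopt_sub[OF pn] by (simp add: Int_absorb1)
    finally show ?thesis .
  qed
  have util_opt: "v p (Aopt p) - sum sh (Aopt p) \<le> v p D - sum sh D"
  proof -
    have "util v sh p (Aopt p) \<le> best_util m v sh p" using best_ge Aopt_sub[OF pn] by blast
    also have "\<dots> = util v sh p D"
      using dc_props(1)[where m=m and b=v and i=p and sh=sh, OF symp] unfolding g_def Dk k_def by simp
    finally show ?thesis unfolding util_def .
  qed
  have shopt: "sum sh (Aopt p) \<le> (\<Sum>j\<in>Aopt p. \<alpha> * (c j (Ts j) / real (card (Ts j \<inter> X))))"
  proof (intro sum_mono)
    fix j assume j: "j \<in> Aopt p"
    then have jm: "j < m" using Aopt_sub[OF pn] by auto
    have pT: "p \<in> Ts j \<inter> X" using Ts_mem pn j pX by auto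
    then have ne: "Ts j \<inter> X \<noteq> {}" by auto
    have cpos: "real (card (Ts j \<inter> X)) > 0" using pT finTs[of j] by (auto simp: card_gt_0_iff)
    have "sh j \<le> \<alpha> * (c j (Ts j \<inter> X) / real (card (Ts j \<inter> X)))" using I5 jm ne by auto
    also have "\<dots> \<le> \<alpha> * (c j (Ts j) / real (card (Ts j \<inter> X)))"
      using cmono[OF jm _ Ts_sub, of "Ts j \<inter> X"] cpos alpha
      by (intro mult_left_mono divide_right_mono) auto
    finally show "sh j \<le> \<alpha> * (c j (Ts j) / real (card (Ts j \<inter> X)))" .
  qed
  have c7: "Qf X' T' + Vp X' A' \<le> Vp X' Aopt + Phi X'"
    using Q V VS PH util_opt shopt acc by linarith
  show ?thesis unfolding step using c1 c2 c3 c4 c5 c6 c7 unfolding invs_def X'_def A'_def by auto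
qed

end



context mech begin

definition st :: "nat \<Rightarrow> state" where "st t = (iacsm_step m v c ^^ t) (iacsm_init n c)"

lemma invs_st: "t \<le> n \<Longrightarrow> (case st t of (X, T, sh, A) \<Rightarrow> invs t X T sh A)"
proof (induction t)
  case 0 then show ?case using invs_init unfolding st_def iacsm_init_def by simp
next
  case (Suc t)
  obtain X T sh A where e: "st t = (X, T, sh, A)" by (cases "st t") auto
  have I: "invs t X T sh A" using Suc e by simp
  have "st (Suc t) = iacsm_step m v c (X, T, sh, A)" unfolding st_def using e[unfolded st_def] by simp
  then show ?case using invs_step[of t X T sh A] I Suc.prems by simp
qed

lemma main_bound:
  shows "social_cost n m v c (iacsm n m v c) \<le> 2 * \<alpha> ^ 3 * harm n * social_cost n m v c Aopt"
proof -
  obtain X T sh A where e: "st n = (X, T, sh, A)" by (cases "st n") auto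
  have I: "invs n X T sh A" using invs_st[of n] e by simp
  obtain K where finX: "finite X" and Xn: "X \<subseteq> {..<n}" and cX: "card X = n - n"
    and XT: "\<forall>j. X \<subseteq> T j \<and> T j \<subseteq> {..<n}"
    and memb: "\<forall>i<n. \<forall>j. i \<notin> X \<longrightarrow> (i \<in> T j \<longleftrightarrow> j \<in> A i)"
    and K1: "K \<le> m" and K2: "\<forall>i<n. i \<notin> X \<longrightarrow> A i \<subseteq> cheapest m sh K"
    and K3: "\<forall>i\<in>X. K \<le> demand_card m v sh i"
    and I4: "\<forall>j<m. T j \<noteq> {} \<longrightarrow> c j (T j) / real (card (T j)) \<le> sh j"
    and I5: "\<forall>j<m. \<forall>R. R \<noteq> {} \<and> R \<subseteq> X \<longrightarrow> sh j \<le> \<alpha> * (c j R / real (card R))"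
    and acc: "Qf X T + Vp X A \<le> Vp X Aopt + Phi X"
    using I unfolding invs_def apply (elim conjE exE) apply (rule that) apply assumption+ done
  have X0: "X = {}" using finX cX by simp
  have outA: "iacsm n m v c = A" unfolding iacsm_def using e[unfolded st_def] by simp
  have rec: "receivers n A j = T j" for j
    using XT memb X0 unfolding receivers_def by auto
  have finT: "finite (T j)" for j using XT by (intro finite_subset[of "T j" "{..<n}"]) auto
  have Qeq: "Qf X T = (\<Sum>j<m. c j (T j))"
    unfolding Qf_def X0
  proof (intro sum.cong refl)
    fix j assume j: "j \<in> {..<m}"
    show "real (card (T j - {})) * (c j (T j) / real (card (T j))) = c j (T j)"
    proof (cases "T j = {}")
      case True then show ?thesis using c_empty j by simp
    next
      case False then have "card (T j) > 0" using finT[of j] by (simp add: card_gt_0_iff)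
      then show ?thesis by simp
    qed
  qed
  have sc: "social_cost n m v c A = Qf X T + Vp X A"
  proof -
    have Vpe: "Vp X A = (\<Sum>i<n. v i {..<m} - v i (A i))" unfolding Vp_def X0 by simp
    show ?thesis unfolding social_cost_def rec Qeq Vpe ..
  qed
  define Cs where "Cs = (\<Sum>j<m. c j (Ts j))"
  define Vs where "Vs = Vp X Aopt"
  have scopt: "social_cost n m v c Aopt = Cs + Vs"
    unfolding social_cost_def Cs_def Vs_def Vp_def X0 Ts_def by simp
  have Cs0: "Cs \<ge> 0" unfolding Cs_def using c_nonneg Ts_sub by (intro sum_nonneg) auto
  have Vs0: "Vs \<ge> 0" unfolding Vs_def Vp_def
  proof (intro sum_nonneg)
    fix i assume "i \<in> {..<n} - X"
    then have i: "i < n" by auto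
    then show "0 \<le> v i {..<m} - v i (Aopt i)"
      using v_mono Aopt_sub[OF i] unfolding non_decreasing_def by auto
  qed
  have a0: "\<alpha> \<ge> 0" using alpha by simp
  have Ph: "Phi X \<le> \<alpha> * harm n * Cs"
  proof -
    have "Phi X = (\<Sum>j<m. \<alpha> * c j (Ts j) * harm (card (Ts j)))" unfolding Phi_def X0 by (simp add: harm_def)
    also have "\<dots> \<le> (\<Sum>j<m. \<alpha> * c j (Ts j) * harm n)"
    proof (intro sum_mono)
      fix j assume "j \<in> {..<m}"
      then have "c j (Ts j) \<ge> 0" using c_nonneg Ts_sub by auto
      moreover have "card (Ts j) \<le> n" using card_mono[OF _ Ts_sub[of j]] by simp
      ultimately show "\<alpha> * c j (Ts j) * harm (card (Ts j)) \<le> \<alpha> * c j (Ts j) * harm n"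
        using a0 by (intro mult_left_mono harm_mono) auto
    qed
    also have "\<dots> = \<alpha> * harm n * Cs" unfolding Cs_def by (simp add: sum_distrib_left sum_distrib_right algebra_simps)
    finally show ?thesis .
  qed
  have bound: "social_cost n m v c A \<le> Vs + \<alpha> * harm n * Cs" using sc acc Ph unfolding Vs_def by linarith
  have h0: "harm n \<ge> (0::real)" by (rule harm_nonneg)
  have a3: "\<alpha> \<le> \<alpha> ^ 3"
  proof -
    have "1 \<le> \<alpha> ^ 2" using alpha by (simp add: one_le_power)
    then have "\<alpha> * 1 \<le> \<alpha> * \<alpha> ^ 2" using a0 by (rule mult_left_mono)
    then show ?thesis by (simp add: power3_eq_cube power2_eq_square mult.assoc)
  qed
  have m1: "\<alpha> * harm n \<le> 2 * \<alpha> ^ 3 * harm n" using a3 h0 a0 by (intro mult_right_mono) auto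
  have L2: "\<alpha> * harm n * Cs \<le> (2 * \<alpha> ^ 3 * harm n) * Cs" by (rule mult_right_mono[OF m1 Cs0])
  have L1: "Vs \<le> (2 * \<alpha> ^ 3 * harm n) * Vs"
  proof (cases "n = 0")
    case True then have "Vs = 0" unfolding Vs_def Vp_def by simp
    then show ?thesis by simp
  next
    case False
    then have "harm n \<ge> (harm 1 :: real)" by (intro harm_mono) auto
    then have h1: "harm n \<ge> (1::real)" by (simp add: harm_def)
    have "1 \<le> \<alpha> ^ 3" using a3 alpha by simp
    then have "1 * 1 \<le> \<alpha> ^ 3 * harm n" using h1 a0 by (intro mult_mono) auto
    then have o: "1 \<le> 2 * \<alpha> ^ 3 * harm n" by simp
    show ?thesis using mult_right_mono[OF o Vs0] by simp
  qed
  have "social_cost n m v c A \<le> (2 * \<alpha> ^ 3 * harm n) * (Cs + Vs)"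
    using bound L1 L2 by (simp add: distrib_left)
  then show ?thesis unfolding outA scopt by simp
qed

end


theorem mainTheorem10:
  fixes n m :: nat and \<alpha> :: real
    and v :: "nat \<Rightarrow> nat set \<Rightarrow> real" and c :: "nat \<Rightarrow> nat set \<Rightarrow> real"
    and Aopt :: "nat \<Rightarrow> nat set"
  assumes alpha: "\<alpha> \<ge> 1"
    and v_nonneg: "\<forall>i<n. \<forall>S \<subseteq> {..<m}. v i S \<ge> 0"
    and v_mono: "\<forall>i<n. non_decreasing {..<m} (v i)"
    and v_sym: "\<forall>i<n. symmetric_fn {..<m} (v i)"
    and v_sub: "\<forall>i<n. submodular {..<m} (v i)"
    and c_nonneg: "\<forall>j<m. \<forall>T \<subseteq> {..<n}. c j T \<ge> 0"
    and c_empty: "\<forall>j<m. c j {} = 0"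
    and c_mono: "\<forall>j<m. non_decreasing {..<n} (c j)"
    and c_avg: "\<forall>j<m. avg_decreasing \<alpha> {..<n} (c j)"
    and opt_alloc: "allocation n m Aopt"
    and opt: "\<forall>A. allocation n m A \<longrightarrow> social_cost n m v c Aopt \<le> social_cost n m v c A"
  shows "social_cost n m v c (iacsm n m v c) \<le> 2 * \<alpha> ^ 3 * harm n * social_cost n m v c Aopt"
  proof -
  interpret mech n m \<alpha> v c Aopt
    by (rule mech.intro[OF alpha v_mono v_sym v_sub c_nonneg c_empty c_mono c_avg opt_alloc])
  show ?thesis by (rule main_bound)
qed

end
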